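(* Let $N\ge1$, $Y=(y_1,\dots,y_N)$ distinct points of $\mathbb{R}^3$, $\alpha\in\mathbb{R}^N$, and for $\mu\ge0$ let $\Gamma_{\alpha,Y}(\mu)$ be the $N\times N$ matrix with entries $[\Gamma_{\alpha,Y}(\mu)]_{jj}=\alpha_j-\frac{i\mu}{4\pi}$ and $[\Gamma_{\alpha,Y}(\mu)]_{j\ell}=-\frac{e^{i\mu|y_j-y_\ell|}}{4\pi|y_j-y_\ell|}$ for $j\neq\ell$. Assume $\Gamma_{\alpha,Y}(\mu)$ is invertible for all $\mu\in[0,+\infty)$ with locally bounded inverse, and let $c_{j\ell}(\mu)=[\Gamma_{\alpha,Y}(\mu)^{-1}]_{j\ell}$. Then, with $\langle\mu\rangle=(1+\mu^2)^{1/2}$: (i) the $c_{j\ell}$ are holomorphic in a neighbourhood of $[0,+\infty)$ and satisfy, for $\mu\ge0$, $|c_{j\ell}(\mu)|\le C\langle\mu\rangle^{-1}$, $|c'_{j\ell}(\mu)|\le C\langle\mu\rangle^{-2}$, $|c''_{j\ell}(\mu)|\le C\langle\mu\rangle^{-2}$; (ii) one can write $c_{j\ell}(\mu)=4\pi i\,\delta_{j\ell}\langle\mu\rangle^{-1}+d_{j\ell}(\mu)$ and also $c_{j\ell}(\mu)=4\pi i\,\delta_{j\ell}\,\mu\langle\mu\rangle^{-2}+\tilde d_{j\ell}(\mu)$, where $d_{j\ell},\tilde d_{j\ell}$ are holomorphic near $[0,\infty)$ and satisfy $|d_{j\ell}|+|d'_{j\ell}|+|d''_{j\ell}|\le C\langle\mu\rangle^{-2}$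 and $|\tilde d_{j\ell}|+|\tilde d'_{j\ell}|+|\tilde d''_{j\ell}|\le C\langle\mu\rangle^{-2}$ for $\mu\ge0$.
   Context: $\delta_{j\ell}$ is the Kronecker delta; primes denote derivatives in $\mu$; $C$ denotes constants independent of $\mu$. *)

theory Defs
  imports "HOL-Analysis.Analysis"
begin

text \<open>The matrix Gamma_{alpha,Y}(z), written for complex spectral parameter z
  (its entries are entire in z); the index set of the points is a finite type 'n,
  so N = CARD('n) >= 1.\<close>
definition Gamma_mat :: "('n::finite \<Rightarrow> real) \<Rightarrow> ('n \<Rightarrow> real^3) \<Rightarrow> complex \<Rightarrow> complex^'n^'n" where
  "Gamma_mat \<alpha> y z = (\<chi> j l. if j = l
      then complex_of_real (\<alpha> j) - \<i> * z / (4 * complex_of_real pi)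
      else - exp (\<i> * z * complex_of_real (dist (y j) (y l)))
             / (4 * complex_of_real pi * complex_of_real (dist (y j) (y l))))"

definition cinv :: "('n::finite \<Rightarrow> real) \<Rightarrow> ('n \<Rightarrow> real^3) \<Rightarrow> 'n \<Rightarrow> 'n \<Rightarrow> complex \<Rightarrow> complex" where
  "cinv \<alpha> y j l z = matrix_inv (Gamma_mat \<alpha> y z) $ j $ l"

definition jbr :: "real \<Rightarrow> real" where
  "jbr \<mu> = sqrt (1 + \<mu>^2)"

definition holo_near_halfline :: "(complex \<Rightarrow> complex) \<Rightarrow> bool" where
  "holo_near_halfline f \<longleftrightarrow> (\<exists>S. open S \<and> complex_of_real ` {0..} \<subseteq> S \<and> f holomorphic_on S)"

end

theory Submission
  imports Defs "HOL-Complex_Analysis.Cauchy_Integral_Formula"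
begin


lemma holo_det:
  fixes M :: "complex \<Rightarrow> complex^'n::finite^'n"
  assumes "\<And>i j. (\<lambda>z. M z $ i $ j) holomorphic_on S"
  shows "(\<lambda>z. det (M z)) holomorphic_on S"
  unfolding det_def
  by (intro holomorphic_intros assms)

lemma Gamma_entry_holo:
  "(\<lambda>z. Gamma_mat \<alpha> y z $ i $ j) holomorphic_on S"
  unfolding Gamma_mat_def by (cases "i = j") (auto intro!: holomorphic_intros)

lemma Gamma_det_holo: "(\<lambda>z. det (Gamma_mat \<alpha> y z)) holomorphic_on S"
  by (intro holo_det Gamma_entry_holo)

lemma inv_props:
  fixes A :: "'a::field^'n::finite^'n"
  assumes "invertible A"
  shows "A ** matrix_inv A = mat 1 \<and> matrix_inv A ** A = mat 1"
  using assms unfolding invertible_def matrix_inv_def by (rule someI_ex)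

lemma inv_formula:
  fixes A :: "'a::field^'n::finite^'n"
  assumes d: "det A \<noteq> 0"
  shows "matrix_inv A $ j $ l =
     det (\<chi> i k. if k = j then (if i = l then 1 else 0) else A$i$k) / det A"
proof -
  have "invertible A" using d invertible_det_nz by blast
  then have AB: "A ** matrix_inv A = mat 1" using inv_props by blast
  define x where "x = (\<chi> k. matrix_inv A $ k $ l)"
  define b where "b = ((\<chi> i. if i = l then 1 else 0) :: 'a^'n)"
  have "A *v x = b"
  proof -
    have "(A *v x) $ i = (A ** matrix_inv A) $ i $ l" for i
      by (simp add: x_def matrix_vector_mult_def matrix_matrix_mult_def)
    then show ?thesis using AB by (simp add: vec_eq_iff b_def mat_def)
  qed
  then have "x = (\<chi> k. det(\<chi> i j. if j=k then b$i else A$i$j) / det A)"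
    using cramer[OF d] by blast
  then have "x $ j = det(\<chi> i k. if k=j then b$i else A$i$k) / det A" by simp
  then show ?thesis by (simp add: x_def b_def cong: if_cong)
qed

definition Uset :: "('n::finite \<Rightarrow> real) \<Rightarrow> ('n \<Rightarrow> real^3) \<Rightarrow> complex set" where
  "Uset \<alpha> y = {z. det (Gamma_mat \<alpha> y z) \<noteq> 0}"

lemma Uset_open: "open (Uset \<alpha> y)"
proof -
  have "continuous_on UNIV (\<lambda>z. det (Gamma_mat \<alpha> y z))"
    using Gamma_det_holo holomorphic_on_imp_continuous_on by blast
  then show ?thesis unfolding Uset_def by (intro open_Collect_neq) auto
qed

lemma holo_if_const: "f holomorphic_on S \<Longrightarrow> (\<lambda>z. if P then c else f z) holomorphic_on S"
  by (cases P) (auto intro: holomorphic_intros)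

lemma cinv_holo: "cinv \<alpha> y j l holomorphic_on Uset \<alpha> y"
proof -
  have "(\<lambda>z. det (\<chi> i k. if k = j then (if i = l then 1 else 0) else Gamma_mat \<alpha> y z$i$k)
         / det (Gamma_mat \<alpha> y z)) holomorphic_on Uset \<alpha> y"
    by (intro holomorphic_intros holo_det Gamma_det_holo)
       (auto simp: Uset_def intro!: holomorphic_intros Gamma_entry_holo holo_if_const)
  then show ?thesis
    by (rule holomorphic_transform) (simp add: cinv_def Uset_def inv_formula)
qed



lemma le_sum2:
  fixes f :: "'n::finite \<Rightarrow> 'm::finite \<Rightarrow> real"
  assumes "\<And>i k. f i k \<ge> 0"
  shows "f i k \<le> (\<Sum>i\<in>UNIV. \<Sum>k\<in>UNIV. f i k)"
proof -
  have "f i k \<le> (\<Sum>k\<in>UNIV. f i k)" by (rule member_le_sum) (auto simp: assms)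
  also have "\<dots> \<le> (\<Sum>i\<in>UNIV. \<Sum>k\<in>UNIV. f i k)" by (rule member_le_sum) (auto simp: assms sum_nonneg)
  finally show ?thesis .
qed

lemma le_sum1:
  fixes f :: "'n::finite \<Rightarrow> 'm::finite \<Rightarrow> real"
  assumes "\<And>i k. f i k \<ge> 0"
  shows "(\<Sum>k\<in>UNIV. f i k) \<le> (\<Sum>i\<in>UNIV. \<Sum>k\<in>UNIV. f i k)"
  by (rule member_le_sum) (auto simp: assms sum_nonneg)

lemma abstract_inj:
  fixes A K :: "complex^'n::finite^'n" and a :: complex
  assumes AK: "\<And>i k. A$i$k = (if i = k then a else 0) + K$i$k"
    and nK: "(\<Sum>i\<in>UNIV. \<Sum>k\<in>UNIV. norm(K$i$k)) \<le> norm a / 2" and a0: "a \<noteq> 0"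
    and x: "A *v x = 0"
  shows "x = 0"
proof -
  define s where "s = (\<Sum>i\<in>UNIV. norm (x$i))"
  have row: "norm a * norm (x$i) \<le> (\<Sum>k\<in>UNIV. norm (K$i$k)) * s" for i
  proof -
    have "(A *v x)$i = (\<Sum>k\<in>UNIV. ((if i = k then a else 0) + K$i$k) * x$k)"
      by (simp add: matrix_vector_mult_def AK)
    also have "\<dots> = a * x$i + (\<Sum>k\<in>UNIV. K$i$k * x$k)"
    proof -
      have "(\<Sum>k\<in>UNIV. (if i = k then a else 0) * x$k) = a * x$i"
        by (simp add: if_distrib[of "\<lambda>t. t * _"] cong: if_cong)
      then show ?thesis by (simp add: distrib_right sum.distrib)
    qed
    finally have "a * x$i = - (\<Sum>k\<in>UNIV. K$i$k * x$k)" using x by (simp add: eq_neg_iff_add_eq_0)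
    then have "norm a * norm (x$i) = norm (\<Sum>k\<in>UNIV. K$i$k * x$k)" by (metis norm_minus_cancel norm_mult)
    also have "\<dots> \<le> (\<Sum>k\<in>UNIV. norm (K$i$k) * norm (x$k))"
      by (rule order_trans[OF norm_sum]) (simp add: norm_mult)
    also have "\<dots> \<le> (\<Sum>k\<in>UNIV. norm (K$i$k) * s)"
      by (intro sum_mono mult_left_mono) (auto simp: s_def intro!: member_le_sum)
    finally show ?thesis by (simp add: sum_distrib_right)
  qed
  have "norm a * s = (\<Sum>i\<in>UNIV. norm a * norm(x$i))" by (simp add: s_def sum_distrib_left)
  also have "\<dots> \<le> (\<Sum>i\<in>UNIV. (\<Sum>k\<in>UNIV. norm(K$i$k)) * s)" by (rule sum_mono) (rule row)
  also have "\<dots> = (\<Sum>i\<in>UNIV. \<Sum>k\<in>UNIV. norm(K$i$k)) * s" by (simp add: sum_distrib_right)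
  also have "\<dots> \<le> norm a / 2 * s"
    by (intro mult_right_mono nK) (auto simp: s_def sum_nonneg)
  finally have "norm a * s \<le> norm a / 2 * s" .
  then have "norm a / 2 * s \<le> 0" by (simp add: algebra_simps)
  then have "s \<le> 0" using a0 by (simp add: mult_le_0_iff)
  moreover have "s \<ge> 0" by (simp add: s_def sum_nonneg)
  ultimately have "s = 0" by simp
  then have "\<forall>i. norm (x$i) = 0"
    unfolding s_def by (subst (asm) sum_nonneg_eq_0_iff) auto
  then show ?thesis by (simp add: vec_eq_iff)
qed

lemma abstract_det:
  fixes A K :: "complex^'n::finite^'n" and a :: complex
  assumes AK: "\<And>i k. A$i$k = (if i = k then a else 0) + K$i$k"
    and nK: "(\<Sum>i\<in>UNIV. \<Sum>k\<in>UNIV. norm(K$i$k)) \<le> norm a / 2" and a0: "a \<noteq> 0"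
  shows "det A \<noteq> 0"
proof -
  have "inj ((*v) A)"
  proof (rule injI)
    fix x y assume "A *v x = A *v y"
    then have "A *v (x - y) = 0" by (simp add: matrix_vector_mult_diff_distrib)
    then have "x - y = 0" by (rule abstract_inj[OF AK nK a0])
    then show "x = y" by simp
  qed
  then show ?thesis using det_nz_iff_inj_gen[of "(*v) A"] by simp
qed

lemma abstract_invbound:
  fixes A K :: "complex^'n::finite^'n" and a :: complex
  assumes AK: "\<And>i k. A$i$k = (if i = k then a else 0) + K$i$k"
    and nK: "(\<Sum>i\<in>UNIV. \<Sum>k\<in>UNIV. norm(K$i$k)) \<le> norm a / 2" and a0: "a \<noteq> 0"
  shows "norm (matrix_inv A $ j $ l - (if j = l then 1/a else 0))
           \<le> 2 * CARD('n) * (\<Sum>i\<in>UNIV. \<Sum>k\<in>UNIV. norm(K$i$k)) / (norm a)^2"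
proof -
  define G where "G = matrix_inv A"
  define nK where "nK = (\<Sum>i\<in>UNIV. \<Sum>k\<in>UNIV. norm(K$i$k))"
  define g where "g = (\<Sum>i\<in>UNIV. \<Sum>k\<in>UNIV. norm(G$i$k))"
  have "det A \<noteq> 0" by (rule abstract_det[OF AK nK a0])
  then have "invertible A" using invertible_det_nz by blast
  then have AG: "A ** G = mat 1" unfolding G_def using inv_props by blast
  have na: "norm a > 0" using a0 by simp
  have nK0: "nK \<ge> 0" by (simp add: nK_def sum_nonneg)
  have g0: "g \<ge> 0" by (simp add: g_def sum_nonneg)
  have ent: "G$i$m - (if i = m then 1/a else 0) = - (\<Sum>k\<in>UNIV. K$i$k * G$k$m) / a" for i m
  proof -
    have "(A ** G)$i$m = (\<Sum>k\<in>UNIV. ((if i = k then a else 0) + K$i$k) * G$k$m)"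
      by (simp add: matrix_matrix_mult_def AK)
    also have "\<dots> = a * G$i$m + (\<Sum>k\<in>UNIV. K$i$k * G$k$m)"
    proof -
      have "(\<Sum>k\<in>UNIV. (if i = k then a else 0) * G$k$m) = a * G$i$m"
        by (simp add: if_distrib[of "\<lambda>t. t * _"] cong: if_cong)
      then show ?thesis by (simp add: distrib_right sum.distrib)
    qed
    finally have "a * G$i$m + (\<Sum>k\<in>UNIV. K$i$k * G$k$m) = (if i = m then 1 else 0)"
      using AG by (simp add: mat_def)
    then show ?thesis using a0 by (auto simp: field_simps)
  qed
  have rowb: "norm (\<Sum>k\<in>UNIV. K$i$k * G$k$m) \<le> (\<Sum>k\<in>UNIV. norm (K$i$k) * norm (G$k$m))" for i m
    by (rule order_trans[OF norm_sum]) (simp add: norm_mult)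
  have entb: "norm (G$i$m) \<le> norm (if i = m then 1/a else 0) + (\<Sum>k\<in>UNIV. norm (K$i$k) * norm (G$k$m)) / norm a" for i m
  proof -
    have "G$i$m = (if i = m then 1/a else 0) - (\<Sum>k\<in>UNIV. K$i$k * G$k$m) / a"
      using ent[of i m] by (simp add: algebra_simps)
    then have "norm (G$i$m) \<le> norm (if i = m then 1/a else 0) + norm ((\<Sum>k\<in>UNIV. K$i$k * G$k$m) / a)"
      by (metis norm_triangle_ineq4)
    also have "\<dots> \<le> norm (if i = m then 1/a else 0) + (\<Sum>k\<in>UNIV. norm (K$i$k) * norm (G$k$m)) / norm a"
      using rowb[of i m] na by (simp add: norm_divide divide_right_mono)
    finally show ?thesis .
  qed
  have gb: "g \<le> CARD('n) / norm a + nK * g / norm a"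
  proof -
    have "g \<le> (\<Sum>i\<in>UNIV. \<Sum>m\<in>UNIV. norm (if i = m then 1/a else 0) + (\<Sum>k\<in>UNIV. norm (K$i$k) * norm (G$k$m)) / norm a)"
      unfolding g_def by (intro sum_mono entb)
    also have "\<dots> = (\<Sum>i\<in>UNIV. \<Sum>m\<in>UNIV. norm (if (i::'n) = m then 1/a else 0)) + (\<Sum>i\<in>UNIV. \<Sum>m\<in>UNIV. \<Sum>k\<in>UNIV. norm (K$i$k) * norm (G$k$m)) / norm a"
      by (simp add: sum.distrib sum_divide_distrib)
    also have "(\<Sum>i\<in>UNIV. \<Sum>m\<in>UNIV. norm (if (i::'n) = m then 1/a else 0)) = CARD('n) / norm a"
    proof -
      have "(\<Sum>m\<in>UNIV. norm (if (i::'n) = m then 1/a else 0)) = 1 / norm a" for i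
        by (simp add: if_distrib[of norm] norm_divide cong: if_cong)
      then show ?thesis by simp
    qed
    also have "(\<Sum>i\<in>UNIV. \<Sum>m\<in>UNIV. \<Sum>k\<in>UNIV. norm (K$i$k) * norm (G$k$m)) = (\<Sum>i\<in>UNIV. \<Sum>k\<in>UNIV. norm (K$i$k) * (\<Sum>m\<in>UNIV. norm (G$k$m)))"
      by (subst sum.swap) (simp add: sum_distrib_left)
    also have "\<dots> \<le> (\<Sum>i\<in>UNIV. \<Sum>k\<in>UNIV. norm (K$i$k) * g)"
      by (intro sum_mono mult_left_mono) (auto simp: g_def intro!: le_sum1)
    also have "\<dots> = nK * g" by (simp add: nK_def sum_distrib_right)
    finally show ?thesis by (simp add: divide_right_mono)
  qed
  have "nK * g / norm a \<le> g / 2"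
  proof -
    have "nK * g \<le> (norm a / 2) * g" using nK g0 unfolding nK_def by (intro mult_right_mono) auto
    then show ?thesis using na by (simp add: divide_le_eq mult.commute)
  qed
  then have "g \<le> 2 * (CARD('n) / norm a)" using gb by linarith
  then have gle: "g \<le> 2 * CARD('n) / norm a" by simp
  have "norm (G$j$l - (if j = l then 1/a else 0)) = norm (\<Sum>k\<in>UNIV. K$j$k * G$k$l) / norm a"
    by (simp add: ent norm_divide)
  also have "\<dots> \<le> (\<Sum>k\<in>UNIV. norm (K$j$k) * norm (G$k$l)) / norm a"
    using rowb na by (simp add: divide_right_mono)
  also have "\<dots> \<le> (\<Sum>k\<in>UNIV. norm (K$j$k) * g) / norm a"
    by (intro divide_right_mono sum_mono mult_left_mono) (auto simp: g_def intro!: le_sum2)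
  also have "\<dots> \<le> nK * g / norm a"
    by (intro divide_right_mono) (auto simp: nK_def sum_distrib_right[symmetric] g0 intro!: mult_right_mono le_sum1)
  also have "\<dots> \<le> nK * (2 * CARD('n) / norm a) / norm a"
    by (intro divide_right_mono mult_left_mono gle nK0) simp
  also have "\<dots> = 2 * CARD('n) * nK / (norm a)^2"
    by (simp add: power2_eq_square field_simps)
  finally show ?thesis by (simp add: G_def nK_def)
qed



lemma Gamma_off_bound:
  assumes "\<bar>Im z\<bar> \<le> 1" "j \<noteq> l"
  shows "norm (Gamma_mat \<alpha> y z $ j $ l) \<le> exp (dist (y j) (y l)) / (4*pi*dist (y j) (y l))"
proof -
  define d where "d = dist (y j) (y l)"
  have d0: "d \<ge> 0" by (simp add: d_def)
  have "Gamma_mat \<alpha> y z $ j $ l = - exp (\<i> * z * complex_of_real d) / (4 * complex_of_real pi * complex_of_real d)"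
    using assms(2) by (simp add: Gamma_mat_def d_def)
  then have "norm (Gamma_mat \<alpha> y z $ j $ l) = exp (Re (\<i> * z * complex_of_real d)) / (4*pi*d)"
    using d0 by (simp add: norm_divide norm_mult norm_exp_eq_Re)
  also have "Re (\<i> * z * complex_of_real d) = - Im z * d" by simp
  also have "- Im z * d \<le> 1 * d"
    by (intro mult_right_mono) (use assms(1) d0 in auto)
  then have "exp (- Im z * d) \<le> exp d" by simp
  then have "exp (- Im z * d) / (4*pi*d) \<le> exp d / (4*pi*d)"
    using d0 by (intro divide_right_mono) auto
  finally show ?thesis by (simp add: d_def)
qed

definition Mconst :: "('n::finite \<Rightarrow> real) \<Rightarrow> ('n \<Rightarrow> real^3) \<Rightarrow> real" where
  "Mconst \<alpha> y = (\<Sum>j\<in>UNIV. \<Sum>l\<in>UNIV. \<bar>\<alpha> j\<bar> + exp (dist (y j) (y l)) / (4*pi*dist (y j) (y l)))"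

lemma Mconst_nonneg: "Mconst \<alpha> y \<ge> 0"
  unfolding Mconst_def by (intro sum_nonneg add_nonneg_nonneg) auto

lemma strip_est:
  fixes \<alpha> :: "'n::finite \<Rightarrow> real" and y :: "'n \<Rightarrow> real^3"
  assumes "\<bar>Im z\<bar> \<le> 1" "8*pi*Mconst \<alpha> y + 1 \<le> norm z"
  shows "det (Gamma_mat \<alpha> y z) \<noteq> 0 \<and>
     norm (cinv \<alpha> y j l z - (if j = l then 4*pi*\<i>/z else 0)) \<le> (32*pi^2*CARD('n)*Mconst \<alpha> y) / (norm z)^2"
proof -
  define M where "M = Mconst \<alpha> y"
  have M0: "M \<ge> 0" using Mconst_nonneg by (simp add: M_def)
  define a where "a = - \<i> * z / (4 * complex_of_real pi)"
  define K where "K = (\<chi> j l. if j = l then complex_of_real (\<alpha> j) else Gamma_mat \<alpha> y z $ j $ l)"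
  have "8*pi*M \<ge> 0" using M0 by simp
  then have "norm z \<ge> 1" using assms(2) unfolding M_def by linarith
  then have z0: "z \<noteq> 0" by auto
  have na: "norm a = norm z / (4*pi)" by (simp add: a_def norm_divide norm_mult)
  have a0: "a \<noteq> 0" using z0 by (simp add: a_def)
  have AK: "Gamma_mat \<alpha> y z $ i $ k = (if i = k then a else 0) + K$i$k" for i k
    by (simp add: Gamma_mat_def K_def a_def)
  have Kb: "norm (K$i$k) \<le> \<bar>\<alpha> i\<bar> + exp (dist (y i) (y k)) / (4*pi*dist (y i) (y k))" for i k
  proof (cases "i = k")
    case True then show ?thesis by (simp add: K_def)
  next
    case False
    then have "norm (K$i$k) \<le> exp (dist (y i) (y k)) / (4*pi*dist (y i) (y k))"
      using Gamma_off_bound[OF assms(1) False] by (simp add: K_def)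
    then show ?thesis by linarith
  qed
  have nK: "(\<Sum>i\<in>UNIV. \<Sum>k\<in>UNIV. norm(K$i$k)) \<le> M"
    unfolding M_def Mconst_def by (intro sum_mono Kb)
  have "M \<le> norm a / 2" using assms(2) unfolding na M_def by (simp add: field_simps)
  then have nK2: "(\<Sum>i\<in>UNIV. \<Sum>k\<in>UNIV. norm(K$i$k)) \<le> norm a / 2" using nK by linarith
  have det: "det (Gamma_mat \<alpha> y z) \<noteq> 0" by (rule abstract_det[OF AK nK2 a0])
  have "norm (matrix_inv (Gamma_mat \<alpha> y z) $ j $ l - (if j = l then 1/a else 0))
           \<le> 2 * CARD('n) * (\<Sum>i\<in>UNIV. \<Sum>k\<in>UNIV. norm(K$i$k)) / (norm a)^2"
    by (rule abstract_invbound[OF AK nK2 a0])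
  also have "\<dots> \<le> 2 * CARD('n) * M / (norm a)^2"
    by (intro divide_right_mono mult_left_mono nK) auto
  also have "\<dots> = (32*pi^2*CARD('n)*M) / (norm z)^2"
    unfolding na by (simp add: field_simps power2_eq_square)
  also have "1/a = 4*pi*\<i>/z" using z0 by (simp add: a_def field_simps)
  finally show ?thesis using det by (simp add: cinv_def M_def)
qed



lemma cauchy12:
  assumes hol: "F holomorphic_on V" and op: "open V" and sub: "cball w 1 \<subseteq> V"
    and bd: "\<And>z. z \<in> cball w 1 \<Longrightarrow> norm (F z) \<le> B"
  shows "norm (deriv F w) \<le> B \<and> norm (deriv (deriv F) w) \<le> 2 * B"
proof -
  have h: "F holomorphic_on ball w 1" using hol sub by (meson ball_subset_cball holomorphic_on_subset order_trans)
  have c: "continuous_on (cball w 1) F" using hol sub holomorphic_on_imp_continuous_on continuous_on_subset by blast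
  have n: "norm (F x) \<le> B" if "norm (w - x) = 1" for x using bd that by (simp add: dist_norm)
  have 1: "norm ((deriv ^^ 1) F w) \<le> fact 1 * B / 1^1" by (rule Cauchy_inequality[OF h c _ n]) auto
  have 2: "norm ((deriv ^^ 2) F w) \<le> fact 2 * B / 1^2" by (rule Cauchy_inequality[OF h c _ n]) auto
  show ?thesis using 1 2 by (simp add: numeral_2_eq_2)
qed

lemma deriv_add2:
  assumes f: "f holomorphic_on V" and g: "g holomorphic_on V" and op: "open V" and w: "w \<in> V"
  shows "deriv (\<lambda>z. f z + g z) w = deriv f w + deriv g w \<and>
         deriv (deriv (\<lambda>z. f z + g z)) w = deriv (deriv f) w + deriv (deriv g) w"
proof -
  have e: "deriv (\<lambda>z. f z + g z) u = deriv f u + deriv g u" if "u \<in> V" for u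
    using that f g op by (intro deriv_add holomorphic_on_imp_differentiable_at) auto
  have "eventually (\<lambda>u. deriv (\<lambda>z. f z + g z) u = deriv f u + deriv g u) (nhds w)"
    using eventually_nhds_in_open[OF op w] by (rule eventually_mono) (use e in auto)
  then have "deriv (deriv (\<lambda>z. f z + g z)) w = deriv (\<lambda>u. deriv f u + deriv g u) w"
    by (rule deriv_cong_ev) simp
  also have "\<dots> = deriv (deriv f) w + deriv (deriv g) w"
    using f g op w by (intro deriv_add holomorphic_on_imp_differentiable_at[of _ V] holomorphic_deriv) auto
  finally show ?thesis using e w by simp
qed

lemma p1_derivs:
  fixes \<kappa> w :: complex
  assumes "w \<noteq> 0"
  shows "deriv (\<lambda>z. \<kappa> / z) w = - \<kappa> / w^2 \<and> deriv (deriv (\<lambda>z. \<kappa> / z)) w = 2 * \<kappa> / w^3"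
proof -
  have d1: "deriv (\<lambda>z. \<kappa> / z) u = - \<kappa> / u^2" if "u \<noteq> 0" for u
    by (rule DERIV_imp_deriv) (use that in \<open>auto intro!: derivative_eq_intros simp: power2_eq_square field_simps\<close>)
  have "eventually (\<lambda>u. u \<in> -{0}) (nhds w)"
    by (rule eventually_nhds_in_open) (use assms in auto)
  then have "eventually (\<lambda>u. deriv (\<lambda>z. \<kappa> / z) u = - \<kappa> / u^2) (nhds w)"
    by (rule eventually_mono) (auto intro: d1)
  then have "deriv (deriv (\<lambda>z. \<kappa> / z)) w = deriv (\<lambda>u. - \<kappa> / u^2) w"
    by (rule deriv_cong_ev) simp
  also have "\<dots> = 2 * \<kappa> / w^3"
    by (rule DERIV_imp_deriv) (use assms in \<open>auto intro!: derivative_eq_intros simp: power2_eq_square power3_eq_cube field_simps\<close>)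
  finally show ?thesis using d1 assms by simp
qed

lemma p2_diff_bound:
  fixes z :: complex
  assumes t: "t \<ge> 2" and re: "Re z \<ge> t"
  shows "norm (1/z - 1/csqrt (1 + z^2)) \<le> 1 / t^2"
proof -
  define s where "s = csqrt (1 + z^2)"
  have nz: "norm z \<ge> t" using re abs_Re_le_cmod[of z] by linarith
  have "Re s \<ge> 0" unfolding s_def by (rule Re_csqrt)
  moreover have "Re (s + z) = Re s + Re z" by (simp only: plus_complex.sel)
  ultimately have "Re (s + z) \<ge> t" using re by linarith
  then have sz0: "s + z \<noteq> 0" and nsz: "norm (s + z) \<ge> t" using t abs_Re_le_cmod[of "s+z"] by auto
  have "s^2 = 1 + z^2" by (simp add: s_def)
  then have "(s - z) * (s + z) = 1" by (simp add: power2_eq_square algebra_simps)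
  then have smz: "s - z = 1 / (s + z)" using sz0 by (simp add: field_simps)
  have "norm (1 + z^2) \<ge> norm z ^ 2 - 1"
    using norm_triangle_ineq2[of "z^2" "-1"] by (simp add: norm_power add.commute)
  moreover have "norm z ^ 2 \<ge> 4"
  proof -
    have "t^2 \<le> norm z ^ 2" by (rule power_mono) (use nz t in auto)
    moreover have "2^2 \<le> t^2" by (rule power_mono) (use t in auto)
    ultimately show ?thesis by simp
  qed
  ultimately have "norm (1 + z^2) \<ge> 1" by linarith
  then have ns: "norm s \<ge> 1" by (simp add: s_def)
  have z0: "z \<noteq> 0" using nz t by auto
  have s0: "s \<noteq> 0" using ns by auto
  have "1/z - 1/s = (s - z) / (z * s)" using z0 s0 by (simp add: field_simps)
  then have "norm (1/z - 1/s) = norm (s - z) / (norm z * norm s)" by (simp add: norm_divide norm_mult)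
  also have "\<dots> \<le> (1/t) / (t * 1)"
  proof (rule frac_le)
    show "norm (s - z) \<le> 1/t" using nsz t unfolding smz by (simp add: norm_divide divide_simps)
    show "t * 1 \<le> norm z * norm s" using nz ns t by (intro mult_mono) auto
  qed (use t in auto)
  finally show ?thesis by (simp add: s_def power2_eq_square)
qed

lemma p3_diff_bound:
  fixes z :: complex
  assumes t: "t \<ge> 2" and nz: "norm z \<ge> t"
  shows "norm (1/z - z/(1 + z^2)) \<le> 1 / t^2"
proof -
  have "norm (1 + z^2) \<ge> norm z ^ 2 - 1"
    using norm_triangle_ineq2[of "z^2" "-1"] by (simp add: norm_power add.commute)
  moreover have "norm z ^ 2 - 1 \<ge> norm z"
  proof -
    have "2 * norm z \<le> norm z * norm z" by (rule mult_right_mono) (use nz t in auto)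
    then show ?thesis using nz t by (simp add: power2_eq_square)
  qed
  ultimately have n1: "norm (1 + z^2) \<ge> norm z" by linarith
  have z0: "z \<noteq> 0" using nz t by auto
  then have q0: "1 + z^2 \<noteq> 0" using n1 by auto
  have "1/z - z/(1+z^2) = 1 / (z * (1 + z^2))" using z0 q0 by (simp add: field_simps power2_eq_square)
  then have "norm (1/z - z/(1+z^2)) = 1 / (norm z * norm (1 + z^2))" by (simp add: norm_divide norm_mult)
  also have "\<dots> \<le> 1 / (t * t)"
  proof (rule frac_le)
    show "t * t \<le> norm z * norm (1 + z^2)" using nz n1 t by (intro mult_mono) auto
  qed (use t in auto)
  finally show ?thesis by (simp add: power2_eq_square)
qed

lemma compact_bound:
  assumes "continuous_on V g" "complex_of_real ` {0..R} \<subseteq> V"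
  shows "\<exists>B. \<forall>\<mu>. 0 \<le> \<mu> \<and> \<mu> \<le> R \<longrightarrow> norm (g (complex_of_real \<mu>)) \<le> B"
proof -
  have "compact (complex_of_real ` {0..R})"
    by (intro compact_continuous_image continuous_intros) auto
  then have "compact (g ` complex_of_real ` {0..R})"
    using assms by (intro compact_continuous_image) (auto intro: continuous_on_subset)
  then obtain B where B: "\<forall>x \<in> g ` complex_of_real ` {0..R}. norm x \<le> B"
    using compact_imp_bounded bounded_iff by metis
  show ?thesis using B by (intro exI[of _ B]) auto
qed

lemma combine2:
  fixes f :: "real \<Rightarrow> real"
  assumes R: "R \<ge> 1" and b1: "\<And>\<mu>. 0 \<le> \<mu> \<Longrightarrow> \<mu> \<le> R \<Longrightarrow> f \<mu> \<le> B1"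
    and b2: "\<And>\<mu>. R \<le> \<mu> \<Longrightarrow> f \<mu> \<le> B2 / \<mu>^2" and B2: "B2 \<ge> 0"
  shows "\<exists>C. \<forall>\<mu>. \<mu> \<ge> 0 \<longrightarrow> f \<mu> \<le> C / (jbr \<mu>)^2"
proof -
  obtain m where m0: "m \<ge> 0" and mB: "B1 \<le> m" by (meson max.cobounded1 max.cobounded2)
  show ?thesis
proof (intro exI allI impI)
  fix \<mu> :: real assume mu: "\<mu> \<ge> 0"
  have j2: "(jbr \<mu>)^2 = 1 + \<mu>^2" by (simp add: jbr_def add_nonneg_nonneg)
  show "f \<mu> \<le> (m * (1 + R^2) + 2 * B2) / (jbr \<mu>)^2"
  proof (cases "\<mu> \<le> R")
    case True
    have "f \<mu> \<le> m" using b1[OF mu True] mB by simp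
    also have "\<dots> \<le> m * (1 + R^2) / (1 + \<mu>^2)"
    proof -
      have "\<mu>^2 \<le> R^2" by (rule power_mono) (use True mu in auto)
      then have "m * (1 + \<mu>^2) \<le> m * (1 + R^2)" using m0 by (intro mult_left_mono) auto
      then show ?thesis by (simp add: pos_le_divide_eq add_pos_nonneg)
    qed
    also have "\<dots> \<le> (m * (1 + R^2) + 2 * B2) / (1 + \<mu>^2)"
      using B2 by (intro divide_right_mono) (auto simp: add_pos_nonneg)
    finally show ?thesis using j2 by simp
  next
    case False
    then have "f \<mu> \<le> B2 / \<mu>^2" using b2 by simp
    also have "\<dots> \<le> 2 * B2 / (1 + \<mu>^2)"
    proof -
      have "1 \<le> \<mu>^2" using False R by (intro one_le_power) auto
      then have "1 + \<mu>^2 \<le> 2 * \<mu>^2" by simp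
      then have h: "1 + \<mu>^2 \<le> 2 * \<mu>^2" by simp
      have "B2 / \<mu>^2 = 2 * B2 / (2 * \<mu>^2)" by simp
      also have "\<dots> \<le> 2 * B2 / (1 + \<mu>^2)"
        by (rule divide_left_mono[OF h]) (use B2 \<open>1 \<le> \<mu>^2\<close> in \<open>auto intro!: mult_pos_pos\<close>)
      finally show ?thesis .
    qed
    also have "\<dots> \<le> (m * (1 + R^2) + 2 * B2) / (1 + \<mu>^2)"
      using m0 by (intro divide_right_mono) auto
    finally show ?thesis using j2 by simp
  qed
qed
qed

lemma combine1:
  fixes f :: "real \<Rightarrow> real"
  assumes R: "R \<ge> 1" and b1: "\<And>\<mu>. 0 \<le> \<mu> \<Longrightarrow> \<mu> \<le> R \<Longrightarrow> f \<mu> \<le> B1"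
    and b2: "\<And>\<mu>. R \<le> \<mu> \<Longrightarrow> f \<mu> \<le> B2 / \<mu>" and B2: "B2 \<ge> 0"
  shows "\<exists>C. \<forall>\<mu>. \<mu> \<ge> 0 \<longrightarrow> f \<mu> \<le> C / jbr \<mu>"
proof -
  obtain m where m0: "m \<ge> 0" and mB: "B1 \<le> m" by (meson max.cobounded1 max.cobounded2)
  show ?thesis
proof (intro exI allI impI)
  fix \<mu> :: real assume mu: "\<mu> \<ge> 0"
  have jpos: "jbr \<mu> \<ge> 1" by (simp add: jbr_def)
  show "f \<mu> \<le> (m * (1 + R) + 2 * B2) / jbr \<mu>"
  proof (cases "\<mu> \<le> R")
    case True
    have jle: "jbr \<mu> \<le> 1 + R"
    proof -
      have "1 + \<mu>^2 \<le> (1 + \<mu>)^2" using mu by (simp add: power2_eq_square algebra_simps)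
      then have "jbr \<mu> \<le> sqrt ((1 + \<mu>)^2)" unfolding jbr_def by (rule real_sqrt_le_mono)
      then show ?thesis using mu True by simp
    qed
    have "f \<mu> \<le> m" using b1[OF mu True] mB by simp
    also have "\<dots> \<le> m * (1 + R) / jbr \<mu>"
      using jle jpos m0 by (simp add: pos_le_divide_eq mult_left_mono)
    also have "\<dots> \<le> (m * (1 + R) + 2 * B2) / jbr \<mu>"
      using B2 jpos by (intro divide_right_mono) auto
    finally show ?thesis .
  next
    case False
    then have "f \<mu> \<le> B2 / \<mu>" using b2 by simp
    also have "\<dots> \<le> 2 * B2 / jbr \<mu>"
    proof -
      have "1 \<le> \<mu>^2" using False R by (intro one_le_power) auto
      then have "1 + \<mu>^2 \<le> (2*\<mu>)^2" by (simp add: power2_eq_square)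
      then have "jbr \<mu> \<le> sqrt ((2*\<mu>)^2)" unfolding jbr_def by (rule real_sqrt_le_mono)
      then have "jbr \<mu> \<le> \<bar>2*\<mu>\<bar>" by (simp only: real_sqrt_abs)
      then have "jbr \<mu> \<le> 2 * \<mu>" using False R by simp
      then show ?thesis using B2 False R jpos by (simp add: field_simps mult_left_mono)
    qed
    also have "\<dots> \<le> (m * (1 + R) + 2 * B2) / jbr \<mu>"
      using jpos m0 R by (intro divide_right_mono) auto
    finally show ?thesis .
  qed
qed
qed



lemma ball_geom:
  assumes "z \<in> cball (complex_of_real \<mu>) 1"
  shows "\<bar>Im z\<bar> \<le> 1 \<and> Re z \<ge> \<mu> - 1 \<and> norm z \<ge> \<mu> - 1"
proof -
  have n: "norm (complex_of_real \<mu> - z) \<le> 1" using assms by (simp add: dist_norm)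
  have "\<bar>Im (complex_of_real \<mu> - z)\<bar> \<le> 1" using abs_Im_le_cmod n order_trans by blast
  then have 1: "\<bar>Im z\<bar> \<le> 1" by simp
  have "\<bar>Re (complex_of_real \<mu> - z)\<bar> \<le> 1" using abs_Re_le_cmod n order_trans by blast
  then have 2: "Re z \<ge> \<mu> - 1" by simp
  have "norm z \<ge> Re z" using abs_Re_le_cmod[of z] by linarith
  then show ?thesis using 1 2 by linarith
qed

lemma sq_notnonpos:
  assumes "Re z > 0"
  shows "1 + z^2 \<notin> \<real>\<^sub>\<le>\<^sub>0"
proof
  assume "1 + z^2 \<in> \<real>\<^sub>\<le>\<^sub>0"
  then have a: "Re (1 + z^2) \<le> 0" and b: "Im (1 + z^2) = 0" by (auto simp: complex_nonpos_Reals_iff)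
  from b have "2 * Re z * Im z = 0" by (simp add: power2_eq_square) blast
  then have "Im z = 0" using assms by auto
  then have "Re (1 + z^2) = 1 + (Re z)^2" by (simp add: power2_eq_square)
  moreover have "(Re z)^2 \<ge> 0" by simp
  ultimately show False using a by linarith
qed

lemma sq_real_ok: "1 + (complex_of_real \<mu>)^2 \<notin> \<real>\<^sub>\<le>\<^sub>0"
proof -
  have eq: "1 + (complex_of_real \<mu>)^2 = complex_of_real (1 + \<mu>^2)" by simp
  have "\<mu>^2 \<ge> 0" by simp
  then have h: "\<not> (1 + \<mu>^2 \<le> 0)" by linarith
  have "complex_of_real (1 + \<mu>^2) \<notin> \<real>\<^sub>\<le>\<^sub>0" by (metis h nonpos_Reals_of_real_iff)
  then show ?thesis using eq by metis
qed

lemma open_sq: "open {z::complex. 1 + z^2 \<notin> \<real>\<^sub>\<le>\<^sub>0}"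
proof -
  have "open ((\<lambda>z::complex. 1 + z^2) -` (- \<real>\<^sub>\<le>\<^sub>0))"
  proof (rule continuous_open_vimage)
    show "open (- \<real>\<^sub>\<le>\<^sub>0 :: complex set)" by (simp add: open_Compl)
    show "continuous (at x) (\<lambda>z::complex. 1 + z^2)" for x
      by (intro continuous_add continuous_const continuous_power continuous_ident)
  qed
  then show ?thesis by (simp add: vimage_def Compl_eq)
qed

lemma open_sq2: "open {z::complex. 1 + z^2 \<noteq> 0}"
  by (rule open_Collect_neq) (intro continuous_on_add continuous_on_const continuous_on_power continuous_on_id)+

lemma inv_t_sq:
  fixes \<mu> x :: real
  assumes "\<mu> \<ge> 3" "x \<ge> \<mu> - 1" "K \<ge> 0"
  shows "K / x^2 \<le> 4 * K / \<mu>^2"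
proof -
  have "\<mu>^2 \<le> (2*x)^2" by (rule power_mono) (use assms in auto)
  then have "\<mu>^2 \<le> 4 * x^2" by (simp add: power2_eq_square)
  moreover have "x^2 > 0" "\<mu>^2 > 0" using assms by auto
  ultimately have "4 * K / (4 * x^2) \<le> 4 * K / \<mu>^2"
    using assms(3) by (intro frac_le) auto
  then show ?thesis by simp
qed



lemma holo_compact3:
  assumes hol: "f holomorphic_on V" and op: "open V" and sub: "complex_of_real ` {0..R} \<subseteq> V"
  shows "\<exists>B. \<forall>\<mu>. 0 \<le> \<mu> \<and> \<mu> \<le> R \<longrightarrow> norm (f (complex_of_real \<mu>)) \<le> B \<and>
            norm (deriv f (complex_of_real \<mu>)) \<le> B \<and> norm (deriv (deriv f) (complex_of_real \<mu>)) \<le> B"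
proof -
  have h1: "deriv f holomorphic_on V" using hol op by (rule holomorphic_deriv)
  have h2: "deriv (deriv f) holomorphic_on V" using h1 op by (rule holomorphic_deriv)
  obtain B1 where B1: "\<forall>\<mu>. 0 \<le> \<mu> \<and> \<mu> \<le> R \<longrightarrow> norm (f (complex_of_real \<mu>)) \<le> B1"
    using compact_bound[OF holomorphic_on_imp_continuous_on[OF hol] sub] by blast
  obtain B2 where B2: "\<forall>\<mu>. 0 \<le> \<mu> \<and> \<mu> \<le> R \<longrightarrow> norm (deriv f (complex_of_real \<mu>)) \<le> B2"
    using compact_bound[OF holomorphic_on_imp_continuous_on[OF h1] sub] by blast
  obtain B3 where B3: "\<forall>\<mu>. 0 \<le> \<mu> \<and> \<mu> \<le> R \<longrightarrow> norm (deriv (deriv f) (complex_of_real \<mu>)) \<le> B3"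
    using compact_bound[OF holomorphic_on_imp_continuous_on[OF h2] sub] by blast
  show ?thesis
    by (rule exI[of _ "max B1 (max B2 B3)"]) (use B1 B2 B3 in \<open>auto simp: le_max_iff_disj\<close>)
qed

lemma finish_d:
  assumes hol: "F holomorphic_on V" and op: "open V" and sub: "complex_of_real ` {0..} \<subseteq> V"
    and R: "R \<ge> 1" and B: "B \<ge> 0"
    and big: "\<And>\<mu>. \<mu> \<ge> R \<Longrightarrow> norm (F (complex_of_real \<mu>)) \<le> B / \<mu>^2 \<and>
        norm (deriv F (complex_of_real \<mu>)) \<le> B / \<mu>^2 \<and> norm (deriv (deriv F) (complex_of_real \<mu>)) \<le> 2 * (B / \<mu>^2)"
  shows "holo_near_halfline F \<and> (\<exists>C. \<forall>\<mu>::real. \<mu> \<ge> 0 \<longrightarrow>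
          norm (F (complex_of_real \<mu>)) + norm (deriv F (complex_of_real \<mu>))
            + norm (deriv (deriv F) (complex_of_real \<mu>)) \<le> C / (jbr \<mu>)^2)"
proof
  show "holo_near_halfline F" unfolding holo_near_halfline_def using hol op sub by blast
  have sub': "complex_of_real ` {0..R} \<subseteq> V" using sub by auto
  obtain B1 where B1: "\<forall>\<mu>. 0 \<le> \<mu> \<and> \<mu> \<le> R \<longrightarrow> norm (F (complex_of_real \<mu>)) \<le> B1 \<and>
            norm (deriv F (complex_of_real \<mu>)) \<le> B1 \<and> norm (deriv (deriv F) (complex_of_real \<mu>)) \<le> B1"
    using holo_compact3[OF hol op sub'] by blast
  show "\<exists>C. \<forall>\<mu>::real. \<mu> \<ge> 0 \<longrightarrow>
          norm (F (complex_of_real \<mu>)) + norm (deriv F (complex_of_real \<mu>))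
            + norm (deriv (deriv F) (complex_of_real \<mu>)) \<le> C / (jbr \<mu>)^2"
  proof (rule combine2[OF R])
    fix \<mu> :: real assume "0 \<le> \<mu>" "\<mu> \<le> R"
    then show "norm (F (complex_of_real \<mu>)) + norm (deriv F (complex_of_real \<mu>))
            + norm (deriv (deriv F) (complex_of_real \<mu>)) \<le> 3 * B1"
      using B1 by (smt (verit))
  next
    fix \<mu> :: real assume "R \<le> \<mu>"
    then show "norm (F (complex_of_real \<mu>)) + norm (deriv F (complex_of_real \<mu>))
            + norm (deriv (deriv F) (complex_of_real \<mu>)) \<le> (4 * B) / \<mu>^2" using big[of \<mu>] by simp
  qed (use B in simp)
qed

lemma finish_c:
  assumes hol: "c holomorphic_on V" and op: "open V" and sub: "complex_of_real ` {0..} \<subseteq> V"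
    and R: "R \<ge> 1" and B: "B \<ge> 0"
    and big: "\<And>\<mu>. \<mu> \<ge> R \<Longrightarrow> norm (c (complex_of_real \<mu>)) \<le> B / \<mu> \<and>
        norm (deriv c (complex_of_real \<mu>)) \<le> B / \<mu>^2 \<and> norm (deriv (deriv c) (complex_of_real \<mu>)) \<le> B / \<mu>^2"
  shows "holo_near_halfline c \<and>
       (\<exists>C. \<forall>\<mu>::real. \<mu> \<ge> 0 \<longrightarrow>
          norm (c (complex_of_real \<mu>)) \<le> C / jbr \<mu> \<and>
          norm (deriv c (complex_of_real \<mu>)) \<le> C / (jbr \<mu>)^2 \<and>
          norm (deriv (deriv c) (complex_of_real \<mu>)) \<le> C / (jbr \<mu>)^2)"
proof
  show "holo_near_halfline c" unfolding holo_near_halfline_def using hol op sub by blast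
  have sub': "complex_of_real ` {0..R} \<subseteq> V" using sub by auto
  obtain B1 where B1: "\<forall>\<mu>. 0 \<le> \<mu> \<and> \<mu> \<le> R \<longrightarrow> norm (c (complex_of_real \<mu>)) \<le> B1 \<and>
            norm (deriv c (complex_of_real \<mu>)) \<le> B1 \<and> norm (deriv (deriv c) (complex_of_real \<mu>)) \<le> B1"
    using holo_compact3[OF hol op sub'] by blast
  have "\<exists>C. \<forall>\<mu>. \<mu> \<ge> 0 \<longrightarrow> norm (c (complex_of_real \<mu>)) \<le> C / jbr \<mu>"
  proof (rule combine1[OF R _ _ B])
    fix \<mu> :: real assume "0 \<le> \<mu>" "\<mu> \<le> R"
    then show "norm (c (complex_of_real \<mu>)) \<le> B1" using B1 by blast
  next
    fix \<mu> :: real assume "R \<le> \<mu>"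
    then show "norm (c (complex_of_real \<mu>)) \<le> B / \<mu>" using big by blast
  qed
  then obtain C1 where C1: "\<forall>\<mu>. \<mu> \<ge> 0 \<longrightarrow> norm (c (complex_of_real \<mu>)) \<le> C1 / jbr \<mu>" by blast
  have "\<exists>C. \<forall>\<mu>. \<mu> \<ge> 0 \<longrightarrow> norm (deriv c (complex_of_real \<mu>)) \<le> C / (jbr \<mu>)^2"
  proof (rule combine2[OF R _ _ B])
    fix \<mu> :: real assume "0 \<le> \<mu>" "\<mu> \<le> R"
    then show "norm (deriv c (complex_of_real \<mu>)) \<le> B1" using B1 by blast
  next
    fix \<mu> :: real assume "R \<le> \<mu>"
    then show "norm (deriv c (complex_of_real \<mu>)) \<le> B / \<mu>^2" using big by blast
  qed
  then obtain C2 where C2: "\<forall>\<mu>. \<mu> \<ge> 0 \<longrightarrow> norm (deriv c (complex_of_real \<mu>)) \<le> C2 / (jbr \<mu>)^2" by blast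
  have "\<exists>C. \<forall>\<mu>. \<mu> \<ge> 0 \<longrightarrow> norm (deriv (deriv c) (complex_of_real \<mu>)) \<le> C / (jbr \<mu>)^2"
  proof (rule combine2[OF R _ _ B])
    fix \<mu> :: real assume "0 \<le> \<mu>" "\<mu> \<le> R"
    then show "norm (deriv (deriv c) (complex_of_real \<mu>)) \<le> B1" using B1 by blast
  next
    fix \<mu> :: real assume "R \<le> \<mu>"
    then show "norm (deriv (deriv c) (complex_of_real \<mu>)) \<le> B / \<mu>^2" using big by blast
  qed
  then obtain C3 where C3: "\<forall>\<mu>. \<mu> \<ge> 0 \<longrightarrow> norm (deriv (deriv c) (complex_of_real \<mu>)) \<le> C3 / (jbr \<mu>)^2" by blast
  have jpos: "jbr \<mu> > 0" for \<mu> by (simp add: jbr_def add_pos_nonneg)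
  show "\<exists>C. \<forall>\<mu>::real. \<mu> \<ge> 0 \<longrightarrow>
          norm (c (complex_of_real \<mu>)) \<le> C / jbr \<mu> \<and>
          norm (deriv c (complex_of_real \<mu>)) \<le> C / (jbr \<mu>)^2 \<and>
          norm (deriv (deriv c) (complex_of_real \<mu>)) \<le> C / (jbr \<mu>)^2"
  proof (intro exI allI impI conjI)
    fix \<mu> :: real assume mu: "\<mu> \<ge> 0"
    define C where "C = max C1 (max C2 C3)"
    have jp: "jbr \<mu> > 0" "(jbr \<mu>)^2 > 0" using jpos[of \<mu>] by auto
    have "C1 / jbr \<mu> \<le> max C1 (max C2 C3) / jbr \<mu>" using jp by (intro divide_right_mono) auto
    then show "norm (c (complex_of_real \<mu>)) \<le> max C1 (max C2 C3) / jbr \<mu>"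
      using C1 mu by (meson order_trans)
    have "C2 / (jbr \<mu>)^2 \<le> max C1 (max C2 C3) / (jbr \<mu>)^2" using jp by (intro divide_right_mono) auto
    then show "norm (deriv c (complex_of_real \<mu>)) \<le> max C1 (max C2 C3) / (jbr \<mu>)^2"
      using C2 mu by (meson order_trans)
    have "C3 / (jbr \<mu>)^2 \<le> max C1 (max C2 C3) / (jbr \<mu>)^2" using jp by (intro divide_right_mono) auto
    then show "norm (deriv (deriv c) (complex_of_real \<mu>)) \<le> max C1 (max C2 C3) / (jbr \<mu>)^2"
      using C3 mu by (meson order_trans)
  qed
qed



lemma per_jl:
  fixes \<alpha> :: "'n::finite \<Rightarrow> real" and y :: "'n \<Rightarrow> real^3" and j l :: 'n
  assumes inv: "\<And>\<mu>::real. \<mu> \<ge> 0 \<Longrightarrow> invertible (Gamma_mat \<alpha> y (complex_of_real \<mu>))"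
  shows "holo_near_halfline (cinv \<alpha> y j l) \<and>
       (\<exists>C. \<forall>\<mu>::real. \<mu> \<ge> 0 \<longrightarrow>
          norm (cinv \<alpha> y j l (complex_of_real \<mu>)) \<le> C / jbr \<mu> \<and>
          norm (deriv (cinv \<alpha> y j l) (complex_of_real \<mu>)) \<le> C / (jbr \<mu>)^2 \<and>
          norm (deriv (deriv (cinv \<alpha> y j l)) (complex_of_real \<mu>)) \<le> C / (jbr \<mu>)^2)"
    and "let d = (\<lambda>z. cinv \<alpha> y j l z
              - (if j = l then 4 * complex_of_real pi * \<i> / csqrt (1 + z^2) else 0)) in
        holo_near_halfline d \<and>
        (\<exists>C. \<forall>\<mu>::real. \<mu> \<ge> 0 \<longrightarrow>
          norm (d (complex_of_real \<mu>)) + norm (deriv d (complex_of_real \<mu>))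
            + norm (deriv (deriv d) (complex_of_real \<mu>)) \<le> C / (jbr \<mu>)^2)"
    and "let d = (\<lambda>z. cinv \<alpha> y j l z
              - (if j = l then 4 * complex_of_real pi * \<i> * z / (1 + z^2) else 0)) in
        holo_near_halfline d \<and>
        (\<exists>C. \<forall>\<mu>::real. \<mu> \<ge> 0 \<longrightarrow>
          norm (d (complex_of_real \<mu>)) + norm (deriv d (complex_of_real \<mu>))
            + norm (deriv (deriv d) (complex_of_real \<mu>)) \<le> C / (jbr \<mu>)^2)"
proof -
  define \<kappa> where "\<kappa> = (if j = l then 4 * complex_of_real pi * \<i> else 0)"
  define c where "c = cinv \<alpha> y j l"
  define U where "U = Uset \<alpha> y"
  have Uo: "open U" unfolding U_def by (rule Uset_open)
  have cU: "c holomorphic_on U" unfolding c_def U_def by (rule cinv_holo)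
  have realU: "complex_of_real \<mu> \<in> U" if "\<mu> \<ge> 0" for \<mu>
    using inv[OF that] invertible_det_nz by (auto simp: U_def Uset_def)
  have nk: "norm \<kappa> \<le> 4 * pi" by (simp add: \<kappa>_def norm_mult)
  define M where "M = Mconst \<alpha> y"
  have M0: "M \<ge> 0" unfolding M_def by (rule Mconst_nonneg)
  define R1 where "R1 = 8 * pi * M + 4"
  define Kc where "Kc = 32*pi^2*CARD('n)*M"
  define B where "B = 4 * Kc + 16 * pi"
  have R1: "R1 \<ge> 4" using M0 by (simp add: R1_def)
  have Kc0: "Kc \<ge> 0" using M0 by (simp add: Kc_def)
  have B0: "B \<ge> 0" using Kc0 by (simp add: B_def)
  define F1 where "F1 = (\<lambda>z. c z - \<kappa> / z)"
  define F2 where "F2 = (\<lambda>z. c z - \<kappa> / csqrt (1 + z^2))"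
  define F3 where "F3 = (\<lambda>z. c z - \<kappa> * z / (1 + z^2))"
  define V1 where "V1 = U \<inter> - {0}"
  define V2 where "V2 = U \<inter> {z. 1 + z^2 \<notin> \<real>\<^sub>\<le>\<^sub>0}"
  define V3 where "V3 = U \<inter> {z. 1 + z^2 \<noteq> 0}"
  have V1o: "open V1" unfolding V1_def using Uo by auto
  have V2o: "open V2" unfolding V2_def using Uo open_sq by auto
  have V3o: "open V3" unfolding V3_def using Uo open_sq2 by auto
  have cV1: "c holomorphic_on V1" using cU by (rule holomorphic_on_subset) (auto simp: V1_def)
  have cV2: "c holomorphic_on V2" using cU by (rule holomorphic_on_subset) (auto simp: V2_def)
  have cV3: "c holomorphic_on V3" using cU by (rule holomorphic_on_subset) (auto simp: V3_def)
  have p1h: "(\<lambda>z. \<kappa> / z) holomorphic_on V1" by (intro holomorphic_intros) (auto simp: V1_def)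
  have F1h: "F1 holomorphic_on V1" unfolding F1_def by (rule holomorphic_on_diff[OF cV1 p1h])
  have sqh: "(\<lambda>z. csqrt (1 + z^2)) holomorphic_on V2"
    by (rule holomorphic_on_csqrt') (auto simp: V2_def intro!: holomorphic_intros)
  have sq0: "csqrt (1 + z^2) \<noteq> 0" if "z \<in> V2" for z
  proof
    assume "csqrt (1 + z^2) = 0"
    then have "1 + z^2 = 0" by (metis power2_csqrt power_zero_numeral)
    then show False using that by (auto simp: V2_def)
  qed
  have p2h: "(\<lambda>z. \<kappa> / csqrt (1 + z^2)) holomorphic_on V2"
    by (rule holomorphic_on_divide[OF holomorphic_on_const sqh sq0])
  have F2h: "F2 holomorphic_on V2" unfolding F2_def by (rule holomorphic_on_diff[OF cV2 p2h])
  have F3h: "F3 holomorphic_on V3" unfolding F3_def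
    by (intro holomorphic_intros cV3) (auto simp: V3_def)
  have real1: "complex_of_real ` {0..} \<subseteq> U" using realU by auto
  have real2: "complex_of_real ` {0..} \<subseteq> V2" using realU sq_real_ok by (auto simp: V2_def)
  have real3: "complex_of_real ` {0..} \<subseteq> V3"
  proof -
    have "1 + (complex_of_real \<mu>)^2 \<noteq> 0" for \<mu>
      using sq_real_ok[of \<mu>] by (metis nonpos_Reals_zero_I)
    then show ?thesis using realU by (auto simp: V3_def)
  qed
  have ball: "z \<in> V1 \<and> z \<in> V2 \<and> z \<in> V3 \<and> norm (F1 z) \<le> B / \<mu>^2 \<and> norm (F2 z) \<le> B / \<mu>^2 \<and> norm (F3 z) \<le> B / \<mu>^2"
    if mu: "\<mu> \<ge> R1" and z: "z \<in> cball (complex_of_real \<mu>) 1" for \<mu> z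
  proof -
    have g: "\<bar>Im z\<bar> \<le> 1" "Re z \<ge> \<mu> - 1" "norm z \<ge> \<mu> - 1" using ball_geom[OF z] by auto
    have mu3: "\<mu> \<ge> 3" using mu R1 by linarith
    have nz: "8*pi*Mconst \<alpha> y + 1 \<le> norm z" using g mu unfolding R1_def M_def by linarith
    note st = strip_est[OF g(1) nz, of j l]
    have zU: "z \<in> U" using st by (simp add: U_def Uset_def)
    have z0: "z \<noteq> 0" using g mu3 by auto
    have rez: "Re z > 0" using g mu3 by linarith
    have sq: "1 + z^2 \<notin> \<real>\<^sub>\<le>\<^sub>0" using sq_notnonpos[OF rez] .
    have sq2: "1 + z^2 \<noteq> 0" using sq by (metis nonpos_Reals_zero_I)
    have "(if j = l then 4*pi*\<i>/z else 0) = \<kappa> / z" by (simp add: \<kappa>_def)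
    then have "norm (F1 z) \<le> Kc / (norm z)^2" using st by (simp add: F1_def c_def Kc_def M_def)
    also have "\<dots> \<le> 4 * Kc / \<mu>^2" by (rule inv_t_sq[OF mu3 g(3) Kc0])
    finally have f1: "norm (F1 z) \<le> 4 * Kc / \<mu>^2" .
    have t2: "\<mu> - 1 \<ge> 2" using mu3 by linarith
    have it: "1 / (\<mu> - 1)^2 \<le> 4 * 1 / \<mu>^2" by (rule inv_t_sq[OF mu3]) auto
    have "F2 z = F1 z + \<kappa> * (1/z - 1/csqrt (1 + z^2))" by (simp add: F1_def F2_def algebra_simps)
    then have "norm (F2 z) \<le> norm (F1 z) + norm \<kappa> * norm (1/z - 1/csqrt (1 + z^2))"
      by (metis norm_mult norm_triangle_ineq)
    also have "\<dots> \<le> 4 * Kc / \<mu>^2 + 4 * pi * (4 / \<mu>^2)"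
      using f1 nk p2_diff_bound[OF t2 g(2)] it by (intro add_mono mult_mono) auto
    also have "\<dots> = B / \<mu>^2" by (simp add: B_def add_divide_distrib)
    finally have f2: "norm (F2 z) \<le> B / \<mu>^2" .
    have "F3 z = F1 z + \<kappa> * (1/z - z/(1 + z^2))" by (simp add: F1_def F3_def algebra_simps)
    then have "norm (F3 z) \<le> norm (F1 z) + norm \<kappa> * norm (1/z - z/(1 + z^2))"
      by (metis norm_mult norm_triangle_ineq)
    also have "\<dots> \<le> 4 * Kc / \<mu>^2 + 4 * pi * (4 / \<mu>^2)"
      using f1 nk p3_diff_bound[OF t2 g(3)] it by (intro add_mono mult_mono) auto
    also have "\<dots> = B / \<mu>^2" by (simp add: B_def add_divide_distrib)
    finally have f3: "norm (F3 z) \<le> B / \<mu>^2" .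
    have "4 * Kc / \<mu>^2 \<le> B / \<mu>^2" by (intro divide_right_mono) (auto simp: B_def)
    then show ?thesis using f1 f2 f3 zU z0 sq sq2 by (auto simp: V1_def V2_def V3_def)
  qed
  have dF: "norm (deriv F (complex_of_real \<mu>)) \<le> B / \<mu>^2 \<and> norm (deriv (deriv F) (complex_of_real \<mu>)) \<le> 2 * (B / \<mu>^2)"
    if "F holomorphic_on V" "open V" "\<And>z. z \<in> cball (complex_of_real \<mu>) 1 \<Longrightarrow> z \<in> V \<and> norm (F z) \<le> B / \<mu>^2"
    for F V \<mu>
    using that by (intro cauchy12[of F V]) auto
  have cent: "complex_of_real \<mu> \<in> cball (complex_of_real \<mu>) 1" for \<mu> by simp
  have bigc: "norm (c (complex_of_real \<mu>)) \<le> (B + 4*pi) / \<mu> \<and>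
        norm (deriv c (complex_of_real \<mu>)) \<le> (B + 4*pi) / \<mu>^2 \<and>
        norm (deriv (deriv c) (complex_of_real \<mu>)) \<le> (2*B + 8*pi) / \<mu>^2" if mu: "\<mu> \<ge> R1" for \<mu>
  proof -
    have mu1: "\<mu> \<ge> 1" "\<mu> > 0" using mu R1 by auto
    have w: "complex_of_real \<mu> \<in> V1" using ball[OF mu cent] by auto
    have d1: "norm (deriv F1 (complex_of_real \<mu>)) \<le> B / \<mu>^2 \<and> norm (deriv (deriv F1) (complex_of_real \<mu>)) \<le> 2 * (B / \<mu>^2)"
      using ball[OF mu] by (intro dF[OF F1h V1o]) auto
    have ceq: "c = (\<lambda>z. F1 z + \<kappa> / z)" by (simp add: F1_def)
    note da = deriv_add2[OF F1h p1h V1o w]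
    have z0: "complex_of_real \<mu> \<noteq> 0" using mu1 by simp
    note pd = p1_derivs[OF z0, of \<kappa>]
    have n0: "norm (c (complex_of_real \<mu>)) \<le> B / \<mu>^2 + 4 * pi / \<mu>"
    proof -
      have "norm (c (complex_of_real \<mu>)) \<le> norm (F1 (complex_of_real \<mu>)) + norm (\<kappa> / complex_of_real \<mu>)"
        by (metis ceq norm_triangle_ineq)
      moreover have "norm (\<kappa> / complex_of_real \<mu>) \<le> 4 * pi / \<mu>"
        using nk mu1 by (simp add: norm_divide divide_right_mono)
      ultimately show ?thesis using ball[OF mu cent] by linarith
    qed
    have "B / \<mu>^2 \<le> B / \<mu>" using mu1 B0
      by (intro divide_left_mono) (auto simp: power2_eq_square)
    then have c0: "norm (c (complex_of_real \<mu>)) \<le> (B + 4*pi) / \<mu>" using n0 by (simp add: add_divide_distrib)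
    have "deriv c (complex_of_real \<mu>) = deriv F1 (complex_of_real \<mu>) + (- \<kappa> / (complex_of_real \<mu>)^2)"
      using da pd ceq by simp
    then have "norm (deriv c (complex_of_real \<mu>)) \<le> norm (deriv F1 (complex_of_real \<mu>)) + norm (- \<kappa> / (complex_of_real \<mu>)^2)"
      by (simp only: norm_triangle_ineq)
    also have "norm (- \<kappa> / (complex_of_real \<mu>)^2) = norm \<kappa> / \<mu>^2"
      by (simp add: norm_divide norm_power)
    finally have "norm (deriv c (complex_of_real \<mu>)) \<le> B / \<mu>^2 + norm \<kappa> / \<mu>^2"
      using d1 by linarith
    also have "\<dots> \<le> B / \<mu>^2 + 4*pi / \<mu>^2" using nk by (intro add_left_mono divide_right_mono) auto
    finally have c1: "norm (deriv c (complex_of_real \<mu>)) \<le> (B + 4*pi) / \<mu>^2" by (simp add: add_divide_distrib)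
    have "deriv (deriv c) (complex_of_real \<mu>) = deriv (deriv F1) (complex_of_real \<mu>) + 2 * \<kappa> / (complex_of_real \<mu>)^3"
      using da pd ceq by simp
    then have "norm (deriv (deriv c) (complex_of_real \<mu>)) \<le> norm (deriv (deriv F1) (complex_of_real \<mu>)) + norm (2 * \<kappa> / (complex_of_real \<mu>)^3)"
      by (simp only: norm_triangle_ineq)
    then have "norm (deriv (deriv c) (complex_of_real \<mu>)) \<le> 2 * (B / \<mu>^2) + norm (2 * \<kappa> / (complex_of_real \<mu>)^3)"
      using d1 by linarith
    also have "norm (2 * \<kappa> / (complex_of_real \<mu>)^3) = 2 * norm \<kappa> / \<mu>^3"
      using mu1 by (simp add: norm_divide norm_mult norm_power)
    also have "2 * norm \<kappa> / \<mu>^3 \<le> 8 * pi / \<mu>^2"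
    proof -
      have "2 * norm \<kappa> / \<mu>^3 \<le> 8 * pi / \<mu>^3" using nk mu1 by (intro divide_right_mono) auto
      also have "\<dots> \<le> 8 * pi / \<mu>^2" using mu1
        by (intro divide_left_mono) (auto simp: power2_eq_square power3_eq_cube)
      finally show ?thesis .
    qed
    finally have c2: "norm (deriv (deriv c) (complex_of_real \<mu>)) \<le> (2*B + 8*pi) / \<mu>^2"
      by (simp add: add_divide_distrib)
    show ?thesis using c0 c1 c2 by simp
  qed
  have partc: "holo_near_halfline c \<and>
       (\<exists>C. \<forall>\<mu>::real. \<mu> \<ge> 0 \<longrightarrow>
          norm (c (complex_of_real \<mu>)) \<le> C / jbr \<mu> \<and>
          norm (deriv c (complex_of_real \<mu>)) \<le> C / (jbr \<mu>)^2 \<and>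
          norm (deriv (deriv c) (complex_of_real \<mu>)) \<le> C / (jbr \<mu>)^2)"
  proof (rule finish_c[OF cU Uo real1, of R1 "2*B + 8*pi"])
    show "1 \<le> R1" using R1 by simp
    show "0 \<le> 2 * B + 8 * pi" using B0 by simp
    fix \<mu> :: real assume mu: "R1 \<le> \<mu>"
    have mu1: "\<mu> > 0" using mu R1 by simp
    have a: "(B + 4*pi) / \<mu> \<le> (2*B + 8*pi) / \<mu>" using B0 mu1 by (intro divide_right_mono) auto
    have b: "(B + 4*pi) / \<mu>^2 \<le> (2*B + 8*pi) / \<mu>^2" using B0 mu1 by (intro divide_right_mono) auto
    show "norm (c (complex_of_real \<mu>)) \<le> (2*B + 8*pi) / \<mu> \<and>
        norm (deriv c (complex_of_real \<mu>)) \<le> (2*B + 8*pi) / \<mu>^2 \<and>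
        norm (deriv (deriv c) (complex_of_real \<mu>)) \<le> (2*B + 8*pi) / \<mu>^2"
      using bigc[OF mu] a b by linarith
  qed
  then show "holo_near_halfline (cinv \<alpha> y j l) \<and>
       (\<exists>C. \<forall>\<mu>::real. \<mu> \<ge> 0 \<longrightarrow>
          norm (cinv \<alpha> y j l (complex_of_real \<mu>)) \<le> C / jbr \<mu> \<and>
          norm (deriv (cinv \<alpha> y j l) (complex_of_real \<mu>)) \<le> C / (jbr \<mu>)^2 \<and>
          norm (deriv (deriv (cinv \<alpha> y j l)) (complex_of_real \<mu>)) \<le> C / (jbr \<mu>)^2)"
    by (simp add: c_def)
  have p2: "holo_near_halfline F2 \<and> (\<exists>C. \<forall>\<mu>::real. \<mu> \<ge> 0 \<longrightarrow>
          norm (F2 (complex_of_real \<mu>)) + norm (deriv F2 (complex_of_real \<mu>))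
            + norm (deriv (deriv F2) (complex_of_real \<mu>)) \<le> C / (jbr \<mu>)^2)"
  proof (rule finish_d[OF F2h V2o real2 _ B0, of R1])
    show "1 \<le> R1" using R1 by simp
    fix \<mu> :: real assume mu: "R1 \<le> \<mu>"
    show "norm (F2 (complex_of_real \<mu>)) \<le> B / \<mu>^2 \<and>
        norm (deriv F2 (complex_of_real \<mu>)) \<le> B / \<mu>^2 \<and> norm (deriv (deriv F2) (complex_of_real \<mu>)) \<le> 2 * (B / \<mu>^2)"
      using ball[OF mu cent] dF[OF F2h V2o, of \<mu>] ball[OF mu] by blast
  qed
  have e2: "(\<lambda>z. cinv \<alpha> y j l z - (if j = l then 4 * complex_of_real pi * \<i> / csqrt (1 + z^2) else 0)) = F2"
    by (rule ext) (simp add: F2_def c_def \<kappa>_def)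
  show "let d = (\<lambda>z. cinv \<alpha> y j l z
              - (if j = l then 4 * complex_of_real pi * \<i> / csqrt (1 + z^2) else 0)) in
        holo_near_halfline d \<and>
        (\<exists>C. \<forall>\<mu>::real. \<mu> \<ge> 0 \<longrightarrow>
          norm (d (complex_of_real \<mu>)) + norm (deriv d (complex_of_real \<mu>))
            + norm (deriv (deriv d) (complex_of_real \<mu>)) \<le> C / (jbr \<mu>)^2)"
    unfolding Let_def e2 by (rule p2)
  have p3: "holo_near_halfline F3 \<and> (\<exists>C. \<forall>\<mu>::real. \<mu> \<ge> 0 \<longrightarrow>
          norm (F3 (complex_of_real \<mu>)) + norm (deriv F3 (complex_of_real \<mu>))
            + norm (deriv (deriv F3) (complex_of_real \<mu>)) \<le> C / (jbr \<mu>)^2)"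
  proof (rule finish_d[OF F3h V3o real3 _ B0, of R1])
    show "1 \<le> R1" using R1 by simp
    fix \<mu> :: real assume mu: "R1 \<le> \<mu>"
    show "norm (F3 (complex_of_real \<mu>)) \<le> B / \<mu>^2 \<and>
        norm (deriv F3 (complex_of_real \<mu>)) \<le> B / \<mu>^2 \<and> norm (deriv (deriv F3) (complex_of_real \<mu>)) \<le> 2 * (B / \<mu>^2)"
      using ball[OF mu cent] dF[OF F3h V3o, of \<mu>] ball[OF mu] by blast
  qed
  have e3: "(\<lambda>z. cinv \<alpha> y j l z - (if j = l then 4 * complex_of_real pi * \<i> * z / (1 + z^2) else 0)) = F3"
    by (rule ext) (simp add: F3_def c_def \<kappa>_def)
  show "let d = (\<lambda>z. cinv \<alpha> y j l z
              - (if j = l then 4 * complex_of_real pi * \<i> * z / (1 + z^2) else 0)) in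
        holo_near_halfline d \<and>
        (\<exists>C. \<forall>\<mu>::real. \<mu> \<ge> 0 \<longrightarrow>
          norm (d (complex_of_real \<mu>)) + norm (deriv d (complex_of_real \<mu>))
            + norm (deriv (deriv d) (complex_of_real \<mu>)) \<le> C / (jbr \<mu>)^2)"
    unfolding Let_def e3 by (rule p3)
qed


theorem lemma4p1:
  fixes \<alpha> :: "'n::finite \<Rightarrow> real" and y :: "'n \<Rightarrow> real^3"
  assumes distinct: "inj y"
    and inv: "\<And>\<mu>::real. \<mu> \<ge> 0 \<Longrightarrow> invertible (Gamma_mat \<alpha> y (complex_of_real \<mu>))"
    and locbd: "\<And>\<mu>0::real. \<mu>0 \<ge> 0 \<Longrightarrow> \<exists>e>0. \<exists>B. \<forall>\<mu>::real. \<mu> \<ge> 0 \<and> \<bar>\<mu> - \<mu>0\<bar> < e \<longrightarrow>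
               (\<forall>j l. norm (matrix_inv (Gamma_mat \<alpha> y (complex_of_real \<mu>)) $ j $ l) \<le> B)"
  shows
   "(\<forall>j l. holo_near_halfline (cinv \<alpha> y j l) \<and>
       (\<exists>C. \<forall>\<mu>::real. \<mu> \<ge> 0 \<longrightarrow>
          norm (cinv \<alpha> y j l (complex_of_real \<mu>)) \<le> C / jbr \<mu> \<and>
          norm (deriv (cinv \<alpha> y j l) (complex_of_real \<mu>)) \<le> C / (jbr \<mu>)^2 \<and>
          norm (deriv (deriv (cinv \<alpha> y j l)) (complex_of_real \<mu>)) \<le> C / (jbr \<mu>)^2))
    \<and> (\<forall>j l. let d = (\<lambda>z. cinv \<alpha> y j l z
              - (if j = l then 4 * complex_of_real pi * \<i> / csqrt (1 + z^2) else 0)) in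
        holo_near_halfline d \<and>
        (\<exists>C. \<forall>\<mu>::real. \<mu> \<ge> 0 \<longrightarrow>
          norm (d (complex_of_real \<mu>)) + norm (deriv d (complex_of_real \<mu>))
            + norm (deriv (deriv d) (complex_of_real \<mu>)) \<le> C / (jbr \<mu>)^2))
    \<and> (\<forall>j l. let d = (\<lambda>z. cinv \<alpha> y j l z
              - (if j = l then 4 * complex_of_real pi * \<i> * z / (1 + z^2) else 0)) in
        holo_near_halfline d \<and>
        (\<exists>C. \<forall>\<mu>::real. \<mu> \<ge> 0 \<longrightarrow>
          norm (d (complex_of_real \<mu>)) + norm (deriv d (complex_of_real \<mu>))
            + norm (deriv (deriv d) (complex_of_real \<mu>)) \<le> C / (jbr \<mu>)^2))"
  by (intro conjI allI per_jl[OF inv])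

end
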